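(* For every $0\le k\le n$ and every $\lambda\vdash n$, $$m(\lambda,\beta_{H_n^k})=\sum_{C\in\hat S_n}\chi_\lambda(C)\,(n-|\mathrm{supp}(C)|)_k .$$
   Context: Permutations are composed as functions, and $\pi\in S_n$ is identified with the permutation matrix whose $(i,j)$ entry is $1$ iff $i=\pi(j)$. For $A\in GL_n(\mathbb{Z}_2)$ let $\eta(A)$ (resp. $\theta(A)$) be the partition obtained by sorting the row sums (resp. column sums) of $A$, computed as integers, in weakly decreasing order. For $0\le k\le n$, $H_n^k=\{A\in GL_n(\mathbb{Z}_2)\mid \eta(A)=(n,n-1,\dots,n-k+1,1^{n-k}),\ \theta(A)=((k+1)^{n-k},k,k-1,\dots,1)\}$. $\beta_{H_n^k}$ is the complex permutation representation of $S_n$ on the space with basis $H_n^k$ given by $\pi\circ A=\pi A\pi^{-1}$. $\hat S_n$ is the set of conjugacy classes of $S_n$; $\chi_\lambda$ is the irreducible character indexed by $\lambda$ and $m(\lambda,\beta)$ the multiplicity of this irreducible in $\beta$; $\mathrm{supp}(C)$ is the set of points moved by an element of $C$ (its size depends only on $C$); $(m)_k=m(m-1)\cdots(m-k+1)$ is the falling factorial. *)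

theory Defs
  imports Complex_Main "HOL-Library.Z2" "HOL-Combinatorics.Permutations"
    "Jordan_Normal_Form.Matrix"
begin

text \<open>Index set {0..<n} is used in place of {1..n}; permutations of S_n are
  functions pi with pi permutes {..<n}.\<close>

definition perm_mat :: "nat \<Rightarrow> (nat \<Rightarrow> nat) \<Rightarrow> bit mat" where
  "perm_mat n p = mat n n (\<lambda>(i, j). if i = p j then 1 else 0)"

definition GL2 :: "nat \<Rightarrow> bit mat set" where
  "GL2 n = {A \<in> carrier_mat n n. invertible_mat A}"

definition row_sum :: "bit mat \<Rightarrow> nat \<Rightarrow> nat" where
  "row_sum A i = (\<Sum>j<dim_col A. if A $$ (i, j) = 1 then 1 else 0)"

definition col_sum :: "bit mat \<Rightarrow> nat \<Rightarrow> nat" where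
  "col_sum A j = (\<Sum>i<dim_row A. if A $$ (i, j) = 1 then 1 else 0)"

definition eta :: "bit mat \<Rightarrow> nat list" where
  "eta A = rev (sort (map (row_sum A) [0..<dim_row A]))"

definition theta :: "bit mat \<Rightarrow> nat list" where
  "theta A = rev (sort (map (col_sum A) [0..<dim_col A]))"

definition H :: "nat \<Rightarrow> nat \<Rightarrow> bit mat set" where
  "H n k = {A \<in> GL2 n.
     eta A = map (\<lambda>i. n - i) [0..<k] @ replicate (n - k) 1 \<and>
     theta A = replicate (n - k) (k + 1) @ map (\<lambda>i. k - i) [0..<k]}"

definition conj_act :: "nat \<Rightarrow> (nat \<Rightarrow> nat) \<Rightarrow> bit mat \<Rightarrow> bit mat" where
  "conj_act n p A = perm_mat n p * A * perm_mat n (inv_into UNIV p)"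

text \<open>Character of the permutation representation beta_X: number of fixed basis elements.\<close>
definition perm_char :: "nat \<Rightarrow> bit mat set \<Rightarrow> (nat \<Rightarrow> nat) \<Rightarrow> complex" where
  "perm_char n X p = of_nat (card {A \<in> X. conj_act n p A = A})"

definition is_partition :: "nat list \<Rightarrow> nat \<Rightarrow> bool" where
  "is_partition lam n \<longleftrightarrow> sorted (rev lam) \<and> (\<forall>x\<in>set lam. 0 < x) \<and> sum_list lam = n"

text \<open>Permutation character of the Young subgroup S_alpha (alpha a composition, possibly with
  negative parts, in which case it is 0): number of ordered set partitions of {..<n}
  into pi-invariant blocks of sizes alpha.\<close>
definition young_char :: "nat \<Rightarrow> int list \<Rightarrow> (nat \<Rightarrow> nat) \<Rightarrow> complex" where
  "young_char n alpha p =
     (if \<exists>a\<in>set alpha. a < 0 then 0 else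
      of_nat (card {f \<in> {..<n} \<rightarrow>\<^sub>E {..<length alpha}.
        (\<forall>i<n. f (p i) = f i) \<and>
        (\<forall>t<length alpha. int (card {i\<in>{..<n}. f i = t}) = alpha ! t)}))"

text \<open>Irreducible character chi_lambda via the determinantal (Jacobi-Trudi / Frobenius) formula
  chi_lambda = det (phi^{(lambda_i - i + j)}).\<close>
definition irr_char :: "nat \<Rightarrow> nat list \<Rightarrow> (nat \<Rightarrow> nat) \<Rightarrow> complex" where
  "irr_char n lam p =
     (\<Sum>s | s permutes {..<length lam}.
        of_int (sign s) *
        young_char n (map (\<lambda>i. int (lam ! i) - int i + int (s i)) [0..<length lam]) p)"

definition multiplicity :: "nat \<Rightarrow> nat list \<Rightarrow> ((nat \<Rightarrow> nat) \<Rightarrow> complex) \<Rightarrow> complex" where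
  "multiplicity n lam psi =
     (\<Sum>p | p permutes {..<n}. psi p * cnj (irr_char n lam p)) / of_nat (fact n)"

definition conj_classes :: "nat \<Rightarrow> (nat \<Rightarrow> nat) set set" where
  "conj_classes n = (\<lambda>p. {s \<circ> p \<circ> inv_into UNIV s | s. s permutes {..<n}}) ` {p. p permutes {..<n}}"

definition rep :: "(nat \<Rightarrow> nat) set \<Rightarrow> (nat \<Rightarrow> nat)" where
  "rep C = (SOME p. p \<in> C)"

definition supp_size :: "(nat \<Rightarrow> nat) set \<Rightarrow> nat" where
  "supp_size C = card {i. rep C i \<noteq> i}"

definition falling :: "nat \<Rightarrow> nat \<Rightarrow> nat" where
  "falling m k = (\<Prod>i<k. m - i)"

end

theory Submission
  imports Defs "Jordan_Normal_Form.Determinant" "HOL-Library.Multiset"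
begin

declare mult_bit_eq_and[simp del] add_bit_eq_xor[simp del]

abbreviation pinv :: "(nat \<Rightarrow> nat) \<Rightarrow> nat \<Rightarrow> nat" where "pinv p \<equiv> inv_into UNIV p"

lemma perm_mat_entry: "i < n \<Longrightarrow> j < n \<Longrightarrow> perm_mat n p $$ (i,j) = (if i = p j then 1 else 0)"
  unfolding perm_mat_def by simp

lemma sum_delta_bit: assumes "x < (n::nat)" shows "(\<Sum>l\<in>{0..<n}. (if l = x then (1::bit) else 0) * f l) = f x"
proof -
  have "(\<Sum>l\<in>{0..<n}. (if l = x then (1::bit) else 0) * f l) = (\<Sum>l\<in>{0..<n}. if l = x then f l else 0)"
    by (rule sum.cong) auto
  also have "\<dots> = f x" apply (subst sum.delta)
    apply (rule finite_atLeastLessThan)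
    apply (subst if_P)
    using assms apply (simp only: atLeastLessThan_iff) apply simp
    apply (rule refl)
    done
  finally show ?thesis .
qed
lemma sum_delta_bit': assumes "x < (n::nat)" shows "(\<Sum>l\<in>{0..<n}. f l * (if l = x then (1::bit) else 0)) = f x"
proof -
  have "(\<Sum>l\<in>{0..<n}. f l * (if l = x then (1::bit) else 0)) = (\<Sum>l\<in>{0..<n}. if l = x then f l else 0)"
    by (rule sum.cong) auto
  also have "\<dots> = f x" apply (subst sum.delta)
    apply (rule finite_atLeastLessThan)
    apply (subst if_P)
    using assms apply (simp only: atLeastLessThan_iff) apply simp
    apply (rule refl)
    done
  finally show ?thesis .
qed

lemma conj_act_entry:
  assumes p: "p permutes {..<n}" and A: "A \<in> carrier_mat n n"
  shows "conj_act n p A = mat n n (\<lambda>(i,j). A $$ (pinv p i, pinv p j))"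
proof -
  have pi: "pinv p permutes {..<n}" using p by (simp add: permutes_inv)
  have lt: "x < n \<Longrightarrow> pinv p x < n" for x using pi by (metis lessThan_iff permutes_in_image)
  have e1: "x = p l \<longleftrightarrow> l = pinv p x" for x l using p
    by (metis permutes_inverses(1) permutes_inverses(2))
  have PA: "perm_mat n p * A = mat n n (\<lambda>(i,j). A $$ (pinv p i, j))"
  proof (rule eq_matI)
    fix i j assume i: "i < dim_row (mat n n (\<lambda>(i,j). A $$ (pinv p i, j)))"
      and j: "j < dim_col (mat n n (\<lambda>(i,j). A $$ (pinv p i, j)))"
    hence i: "i < n" and j: "j < n" by auto
    have "(perm_mat n p * A) $$ (i,j) = (\<Sum>l\<in>{0..<n}. (if l = pinv p i then 1 else 0) * A $$ (l, j))"
      using i j A by (simp add: perm_mat_def scalar_prod_def e1 cong: if_cong)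
    also have "\<dots> = A $$ (pinv p i, j)" using lt[OF i] by (rule sum_delta_bit)
    finally show "(perm_mat n p * A) $$ (i,j) = mat n n (\<lambda>(i,j). A $$ (pinv p i, j)) $$ (i,j)"
      using i j by simp
  qed (use A in \<open>auto simp: perm_mat_def\<close>)
  have e2: "l = pinv p j \<longleftrightarrow> p l = j" for l j using e1 by metis
  show ?thesis unfolding conj_act_def PA
  proof (rule eq_matI)
    fix i j assume i: "i < dim_row (mat n n (\<lambda>(i,j). A $$ (pinv p i, pinv p j)))"
      and j: "j < dim_col (mat n n (\<lambda>(i,j). A $$ (pinv p i, pinv p j)))"
    hence i: "i < n" and j: "j < n" by auto
    have "(mat n n (\<lambda>(i,j). A $$ (pinv p i, j)) * perm_mat n (pinv p)) $$ (i,j)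
       = (\<Sum>l\<in>{0..<n}. A $$ (pinv p i, l) * (if l = pinv p j then 1 else 0))"
      using i j A by (simp add: perm_mat_def scalar_prod_def)
    also have "\<dots> = A $$ (pinv p i, pinv p j)" using lt[OF j] by (rule sum_delta_bit')
    finally show "(mat n n (\<lambda>(i,j). A $$ (pinv p i, j)) * perm_mat n (pinv p)) $$ (i,j) =
         mat n n (\<lambda>(i,j). A $$ (pinv p i, pinv p j)) $$ (i,j)" using i j by simp
  qed (auto simp: perm_mat_def)
qed

definition idx :: "nat list \<Rightarrow> nat \<Rightarrow> nat" where
  "idx r x = (LEAST a. r ! a = x)"

lemma idx_eq:
  assumes d: "distinct r" and a: "a < length r" and x: "r ! a = x"
  shows "idx r x = a"
  unfolding idx_def
proof (rule Least_equality)
  show "r ! a = x" by (rule x)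
  fix b assume b: "r ! b = x"
  show "a \<le> b"
  proof (rule ccontr)
    assume "\<not> a \<le> b"
    hence "b < a" by simp
    hence "b < length r" using a by simp
    thus False using d a b x \<open>b < a\<close> nth_eq_iff_index_eq by fastforce
  qed
qed

lemma idx_nth [simp]: "distinct r \<Longrightarrow> a < length r \<Longrightarrow> idx r (r ! a) = a"
  by (rule idx_eq) auto

lemma idx_in: assumes "distinct r" "x \<in> set r" shows "idx r x < length r" "r ! idx r x = x"
proof -
  obtain a where a: "a < length r" "r ! a = x" using assms(2) by (auto simp: in_set_conv_nth)
  have "idx r x = a" using idx_eq[OF assms(1) a] .
  thus "idx r x < length r" "r ! idx r x = x" using a by auto
qed

definition Mrel :: "(nat \<Rightarrow> nat) \<Rightarrow> nat list \<Rightarrow> nat \<Rightarrow> nat \<Rightarrow> bool" where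
  "Mrel psi r i j \<longleftrightarrow> (i \<notin> set r \<and> j = psi i) \<or>
     (i \<in> set r \<and> (\<forall>b<length r. j \<noteq> psi (r ! b) \<or> idx r i + b < length r))"

definition Mx :: "nat \<Rightarrow> (nat \<Rightarrow> nat) \<Rightarrow> nat list \<Rightarrow> bit mat" where
  "Mx n psi r = mat n n (\<lambda>(i,j). if Mrel psi r i j then 1 else 0)"

definition Par :: "nat \<Rightarrow> nat \<Rightarrow> ((nat \<Rightarrow> nat) \<times> nat list) set" where
  "Par n k = {(psi, r). psi permutes {..<n} \<and> length r = k \<and> distinct r \<and> set r \<subseteq> {..<n}}"

lemma perm_lt [simp]: "p permutes {..<n} \<Longrightarrow> p i < n \<longleftrightarrow> i < n"
  by (metis lessThan_iff permutes_in_image)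

lemma pinv_lt [simp]: "p permutes {..<n} \<Longrightarrow> pinv p i < n \<longleftrightarrow> i < n"
  by (metis lessThan_iff permutes_in_image permutes_inv)

lemma Mx_carrier [simp]: "Mx n psi r \<in> carrier_mat n n" unfolding Mx_def by simp

lemma Mx_dim [simp]: "dim_row (Mx n psi r) = n" "dim_col (Mx n psi r) = n" unfolding Mx_def by simp_all

lemma Mx_entry: "i < n \<Longrightarrow> j < n \<Longrightarrow> Mx n psi r $$ (i,j) = (if Mrel psi r i j then 1 else 0)"
  unfolding Mx_def by simp

lemma Mrel_conj:
  assumes p: "p permutes {..<n}" and d: "distinct r"
  shows "Mrel (p \<circ> psi \<circ> pinv p) (map p r) i j \<longleftrightarrow> Mrel psi r (pinv p i) (pinv p j)"
proof -
  have pinj: "inj p" using p by (rule permutes_inj)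
  have pi: "p (pinv p x) = x" "pinv p (p x) = x" for x using p by (auto simp: permutes_inverses)
  have mem: "i \<in> set (map p r) \<longleftrightarrow> pinv p i \<in> set r"
    by (metis pi(1) image_iff list.set_map pi(2))
  have dm: "distinct (map p r)" using d pinj by (simp add: distinct_map inj_on_def)
  have ix: "idx (map p r) i = idx r (pinv p i)" if "pinv p i \<in> set r"
  proof -
    have a: "idx r (pinv p i) < length r" "r ! idx r (pinv p i) = pinv p i" using idx_in[OF d that] by auto
    have "map p r ! idx r (pinv p i) = i" using a pi by simp
    thus ?thesis using idx_eq[OF dm] a by simp
  qed
  have e1: "j = (p \<circ> psi \<circ> pinv p) i \<longleftrightarrow> pinv p j = psi (pinv p i)" using pi by (metis comp_apply)
  have e2: "b < length r \<Longrightarrow> j \<noteq> (p \<circ> psi \<circ> pinv p) (map p r ! b) \<longleftrightarrow> pinv p j \<noteq> psi (r ! b)" for b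
    using pi by (simp, metis)
  show ?thesis unfolding Mrel_def mem length_map using e1 e2 ix by auto
qed

lemma conj_Mx:
  assumes p: "p permutes {..<n}" and d: "distinct r"
  shows "conj_act n p (Mx n psi r) = Mx n (p \<circ> psi \<circ> pinv p) (map p r)"
  unfolding conj_act_entry[OF p Mx_carrier]
proof (rule eq_matI)
  fix i j assume "i < dim_row (Mx n (p \<circ> psi \<circ> pinv p) (map p r))" "j < dim_col (Mx n (p \<circ> psi \<circ> pinv p) (map p r))"
  hence i: "i < n" and j: "j < n" by auto
  show "mat n n (\<lambda>(i, j). Mx n psi r $$ (pinv p i, pinv p j)) $$ (i, j) = Mx n (p \<circ> psi \<circ> pinv p) (map p r) $$ (i, j)"
    using i j p by (simp add: Mx_entry Mrel_conj[OF p d])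
qed auto

lemma sum_ind_card: "finite A \<Longrightarrow> (\<Sum>j\<in>A. if P j then (1::nat) else 0) = card {j\<in>A. P j}"
  by (simp add: sum.If_cases Int_def conj_commute)

lemma card_set_idx:
  assumes d: "distinct r"
  shows "card {i \<in> set r. P (idx r i)} = card {a. a < length r \<and> P a}"
proof -
  have "{i \<in> set r. P (idx r i)} = (\<lambda>a. r ! a) ` {a. a < length r \<and> P a}"
  proof (rule equalityI; rule subsetI)
    fix i assume "i \<in> {i \<in> set r. P (idx r i)}"
    hence i: "i \<in> set r" "P (idx r i)" by auto
    thus "i \<in> (\<lambda>a. r ! a) ` {a. a < length r \<and> P a}" using idx_in[OF d i(1)]
      by (metis (mono_tags, lifting) image_eqI mem_Collect_eq)
  next
    fix i assume "i \<in> (\<lambda>a. r ! a) ` {a. a < length r \<and> P a}"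
    then obtain a where a: "a < length r" "P a" "i = r ! a" by blast
    thus "i \<in> {i \<in> set r. P (idx r i)}" using d by simp
  qed
  moreover have "inj_on (\<lambda>a. r ! a) {a. a < length r \<and> P a}"
    using d by (simp add: inj_on_def nth_eq_iff_index_eq)
  ultimately show ?thesis by (simp add: card_image)
qed

lemma card_ge_interval: "a \<le> k \<Longrightarrow> card {b. b < k \<and> k \<le> a + b} = (a::nat)"
proof -
  assume "a \<le> k"
  hence "{b. b < k \<and> k \<le> a + b} = {k - a..<k}" by auto
  thus ?thesis using \<open>a \<le> k\<close> by simp
qed

lemma card_lt_interval: "card {a. a < k \<and> a + b < k} = (k::nat) - b"
proof -
  have "{a. a < k \<and> a + b < k} = {..<k - b}" by auto
  thus ?thesis by simp
qed

lemma row_sum_Mx: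
  assumes P: "(psi, r) \<in> Par n k" and i: "i < n"
  shows "row_sum (Mx n psi r) i = (if i \<in> set r then n - idx r i else 1)"
proof -
  have psi: "psi permutes {..<n}" and len: "length r = k" and d: "distinct r" and sr: "set r \<subseteq> {..<n}"
    using P unfolding Par_def by auto
  have "row_sum (Mx n psi r) i = (\<Sum>j<n. if Mrel psi r i j then 1 else 0)"
    unfolding row_sum_def by (rule sum.cong) (auto simp: Mx_entry i)
  also have "\<dots> = card {j\<in>{..<n}. Mrel psi r i j}" by (rule sum_ind_card) simp
  also have "\<dots> = (if i \<in> set r then n - idx r i else 1)"
  proof (cases "i \<in> set r")
    case False
    hence "{j\<in>{..<n}. Mrel psi r i j} = {psi i}" using psi i unfolding Mrel_def by auto
    thus ?thesis using False by simp
  next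
    case True
    let ?a = "idx r i"
    have a: "?a < k" using idx_in[OF d True] len by simp
    let ?B = "(\<lambda>b. psi (r ! b)) ` {b. b < k \<and> k \<le> ?a + b}"
    have e: "{j\<in>{..<n}. Mrel psi r i j} = {..<n} - ?B"
      using True len unfolding Mrel_def by (auto simp: not_less)
    have sub: "?B \<subseteq> {..<n}" using sr psi len by (auto dest!: nth_mem)
    have inj: "inj_on (\<lambda>b. psi (r ! b)) {b. b < k \<and> k \<le> ?a + b}"
    proof -
      have pinj: "psi u = psi v \<longleftrightarrow> u = v" for u v using permutes_inj[OF psi] by (auto dest: injD)
      show ?thesis using d len by (auto simp: inj_on_def pinj nth_eq_iff_index_eq)
    qed
    have "card ?B = ?a" using card_image[OF inj] card_ge_interval[of ?a k] a by simp
    hence "card ({..<n} - ?B) = n - ?a" using sub by (simp add: card_Diff_subset finite_subset)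
    thus ?thesis using e True by simp
  qed
  finally show ?thesis .
qed

lemma col_sum_Mx:
  assumes P: "(psi, r) \<in> Par n k" and j: "j < n"
  shows "col_sum (Mx n psi r) j = (if pinv psi j \<in> set r then k - idx r (pinv psi j) else k + 1)"
proof -
  have psi: "psi permutes {..<n}" and len: "length r = k" and d: "distinct r" and sr: "set r \<subseteq> {..<n}"
    using P unfolding Par_def by auto
  define x where "x = pinv psi j"
  have x: "x < n" unfolding x_def using psi j by simp
  have jx: "j = psi x" unfolding x_def using psi by (simp add: permutes_inverses)
  have inj: "psi u = psi v \<longleftrightarrow> u = v" for u v using permutes_inj[OF psi] by (auto dest: injD)
  have "col_sum (Mx n psi r) j = (\<Sum>i<n. if Mrel psi r i j then 1 else 0)"
    unfolding col_sum_def by (rule sum.cong) (auto simp: Mx_entry j)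
  also have "\<dots> = card {i\<in>{..<n}. Mrel psi r i j}" by (rule sum_ind_card) simp
  also have "\<dots> = (if x \<in> set r then k - idx r x else k + 1)"
  proof (cases "x \<in> set r")
    case False
    have "{i\<in>{..<n}. Mrel psi r i j} = insert x (set r)"
      using False x sr len unfolding Mrel_def jx inj by (auto simp: in_set_conv_nth)
    thus ?thesis using False d len by (simp add: distinct_card)
  next
    case True
    let ?b = "idx r x"
    have b: "?b < k" "r ! ?b = x" using idx_in[OF d True] len by auto
    have "{i\<in>{..<n}. Mrel psi r i j} = {i \<in> set r. idx r i + ?b < k}"
    proof (rule equalityI; rule subsetI)
      fix i assume "i \<in> {i\<in>{..<n}. Mrel psi r i j}"
      hence "Mrel psi r i j" by simp
      thus "i \<in> {i \<in> set r. idx r i + ?b < k}" using True b len unfolding Mrel_def jx inj by auto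
    next
      fix i assume i: "i \<in> {i \<in> set r. idx r i + ?b < k}"
      have "\<forall>c<length r. j \<noteq> psi (r ! c) \<or> idx r i + c < length r"
      proof (intro allI impI)
        fix c assume c: "c < length r"
        show "j \<noteq> psi (r ! c) \<or> idx r i + c < length r"
        proof (cases "c = ?b")
          case True thus ?thesis using i len by simp
        next
          case False
          hence "r ! c \<noteq> x" using b c d len by (metis nth_eq_iff_index_eq)
          thus ?thesis unfolding jx inj by simp
        qed
      qed
      thus "i \<in> {i\<in>{..<n}. Mrel psi r i j}" using i sr unfolding Mrel_def by auto
    qed
    hence "card {i\<in>{..<n}. Mrel psi r i j} = card {a. a < k \<and> a + ?b < k}"
      using card_set_idx[OF d, of "\<lambda>a. a + ?b < k"] len by simp
    thus ?thesis using True card_lt_interval by simp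
  qed
  finally show ?thesis unfolding x_def .
qed

lemma mset_split:
  assumes d: "distinct r" and sr: "set r \<subseteq> {..<n}"
    and hf: "\<And>i. i \<in> set r \<Longrightarrow> f i = g (idx r i)"
    and hc: "\<And>i. i < n \<Longrightarrow> i \<notin> set r \<Longrightarrow> f i = c"
  shows "image_mset f (mset_set {..<n}) = mset (map g [0..<length r]) + replicate_mset (n - length r) c"
proof -
  let ?R = "{..<n} - set r"
  have U: "{..<n} = set r \<union> ?R" using sr by auto
  have "mset_set {..<n} = mset_set (set r) + mset_set ?R"
    by (subst U, rule mset_set_Union) auto
  hence "image_mset f (mset_set {..<n}) = image_mset f (mset r) + image_mset f (mset_set ?R)"
    using d by (simp add: mset_set_set)
  also have "image_mset f (mset r) = mset (map g [0..<length r])"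
  proof -
    have "map f r = map g [0..<length r]"
      by (rule nth_equalityI) (auto simp: hf d)
    thus ?thesis by (metis mset_map)
  qed
  also have "image_mset f (mset_set ?R) = image_mset (\<lambda>_. c) (mset_set ?R)"
    by (rule image_mset_cong) (use hc in auto)
  also have "\<dots> = replicate_mset (card ?R) c" by (simp add: image_mset_const_eq)
  also have "card ?R = n - length r" using sr d by (simp add: card_Diff_subset distinct_card)
  finally show ?thesis .
qed

lemma rev_sort_eq: "mset xs = mset L \<Longrightarrow> sorted (rev L) \<Longrightarrow> rev (sort xs) = (L :: nat list)"
  by (metis mset_rev properties_for_sort rev_rev_ident)

definition RL :: "nat \<Rightarrow> nat \<Rightarrow> nat list" where
  "RL n k = map (\<lambda>i. n - i) [0..<k] @ replicate (n - k) 1"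
definition CL :: "nat \<Rightarrow> nat \<Rightarrow> nat list" where
  "CL n k = replicate (n - k) (k + 1) @ map (\<lambda>i. k - i) [0..<k]"

lemma H_alt: "H n k = {A \<in> GL2 n. eta A = RL n k \<and> theta A = CL n k}"
  unfolding H_def RL_def CL_def ..

lemma sorted_RL: "k \<le> n \<Longrightarrow> sorted (rev (RL n k))"
  unfolding RL_def sorted_rev_iff_nth_mono
  by (auto simp: nth_append)

lemma sorted_CL: "sorted (rev (CL n k))"
  unfolding CL_def sorted_rev_iff_nth_mono
  by (auto simp: nth_append)

lemma mset_rows_eq: "mset (map f [0..<n]) = image_mset f (mset_set {..<n})"
  by (simp add: atLeast0LessThan)

lemma eta_Mx:
  assumes P: "(psi, r) \<in> Par n k" and k: "k \<le> n"
  shows "eta (Mx n psi r) = RL n k"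
proof -
  have psi: "psi permutes {..<n}" and len: "length r = k" and d: "distinct r" and sr: "set r \<subseteq> {..<n}"
    using P unfolding Par_def by auto
  have "image_mset (row_sum (Mx n psi r)) (mset_set {..<n}) = mset (map (\<lambda>a. n - a) [0..<k]) + replicate_mset (n - k) 1"
    by (rule mset_split[OF d sr, of _ "\<lambda>a. n - a", unfolded len])
      (use sr in \<open>auto simp: row_sum_Mx[OF P]\<close>)
  hence "mset (map (row_sum (Mx n psi r)) [0..<n]) = mset (RL n k)"
    unfolding mset_rows_eq RL_def by (simp add: atLeast0LessThan)
  thus ?thesis unfolding eta_def Mx_dim by (rule rev_sort_eq[OF _ sorted_RL[OF k]])
qed

lemma theta_Mx:
  assumes P: "(psi, r) \<in> Par n k" and k: "k \<le> n"
  shows "theta (Mx n psi r) = CL n k"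
proof -
  have psi: "psi permutes {..<n}" and len: "length r = k" and d: "distinct r" and sr: "set r \<subseteq> {..<n}"
    using P unfolding Par_def by auto
  have "image_mset (col_sum (Mx n psi r)) (mset_set {..<n})
      = image_mset (col_sum (Mx n psi r)) (image_mset psi (mset_set {..<n}))"
    using permutes_image_mset[OF psi] by simp
  also have "\<dots> = image_mset (col_sum (Mx n psi r) \<circ> psi) (mset_set {..<n})"
    by (simp add: multiset.map_comp)
  also have "\<dots> = mset (map (\<lambda>a. k - a) [0..<k]) + replicate_mset (n - k) (k + 1)"
    by (rule mset_split[OF d sr, of _ "\<lambda>a. k - a", unfolded len])
      (use sr psi in \<open>auto simp: col_sum_Mx[OF P] permutes_inverses\<close>)
  finally have "mset (map (col_sum (Mx n psi r)) [0..<n]) = mset (CL n k)"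
    unfolding mset_rows_eq CL_def by (simp add: add.commute atLeast0LessThan)
  thus ?thesis unfolding theta_def Mx_dim by (rule rev_sort_eq[OF _ sorted_CL])
qed

lemma Mrel_psi:
  assumes psi: "psi permutes {..<n}" and d: "distinct r"
  shows "Mrel psi r i (psi x) \<longleftrightarrow> (i \<notin> set r \<and> x = i) \<or> (i \<in> set r \<and> (x \<notin> set r \<or> idx r i + idx r x < length r))"
proof -
  have inj: "psi u = psi v \<longleftrightarrow> u = v" for u v using permutes_inj[OF psi] by (auto dest: injD)
  have E: "(\<forall>b<length r. x \<noteq> r ! b \<or> idx r i + b < length r) \<longleftrightarrow> (x \<notin> set r \<or> idx r i + idx r x < length r)"
  proof
    assume h: "\<forall>b<length r. x \<noteq> r ! b \<or> idx r i + b < length r"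
    show "x \<notin> set r \<or> idx r i + idx r x < length r"
    proof (cases "x \<in> set r")
      case True thus ?thesis using h idx_in[OF d True] by metis
    qed simp
  next
    assume h: "x \<notin> set r \<or> idx r i + idx r x < length r"
    show "\<forall>b<length r. x \<noteq> r ! b \<or> idx r i + b < length r"
    proof (intro allI impI)
      fix b assume b: "b < length r"
      show "x \<noteq> r ! b \<or> idx r i + b < length r"
      proof (cases "x = r ! b")
        case True
        hence "x \<in> set r" "idx r x = b" using b d by auto
        thus ?thesis using h by simp
      qed simp
    qed
  qed
  show ?thesis unfolding Mrel_def inj E by blast
qed

lemma prefix_sums_zero:
  fixes w :: "nat \<Rightarrow> bit"
  assumes h: "\<And>m. m \<le> k \<Longrightarrow> (\<Sum>b<m. w b) = 0"
  shows "b < k \<Longrightarrow> w b = 0"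
proof -
  assume b: "b < k"
  have s1: "(\<Sum>c<Suc b. w c) = 0" by (rule h) (use b in simp)
  have s2: "(\<Sum>c<b. w c) = 0" by (rule h) (use b in simp)
  have "(\<Sum>c<Suc b. w c) = (\<Sum>c<b. w c) + w b" by (rule sum.lessThan_Suc)
  thus "w b = 0" unfolding s1 s2 by simp
qed

lemma Mx_det:
  assumes P: "(psi, r) \<in> Par n k"
  shows "det (Mx n psi r) \<noteq> 0"
proof
  assume "det (Mx n psi r) = 0"
  then obtain v where v: "v \<in> carrier_vec n" and v0: "v \<noteq> 0\<^sub>v n" and Mv: "Mx n psi r *\<^sub>v v = 0\<^sub>v n"
    using det_0_iff_vec_prod_zero[OF Mx_carrier] by blast
  have psi: "psi permutes {..<n}" and len: "length r = k" and d: "distinct r" and sr: "set r \<subseteq> {..<n}"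
    using P unfolding Par_def by auto
  define u where "u x = v $ (psi x)" for x
  have eq: "(\<Sum>x\<in>{0..<n}. if Mrel psi r i (psi x) then u x else 0) = 0" if i: "i < n" for i
  proof -
    have "0 = (Mx n psi r *\<^sub>v v) $ i" using Mv i by simp
    also have "\<dots> = (\<Sum>j\<in>{0..<n}. Mx n psi r $$ (i, j) * v $ j)"
      using i v by (simp add: mult_mat_vec_def scalar_prod_def)
    also have "\<dots> = (\<Sum>j\<in>{0..<n}. if Mrel psi r i j then v $ j else 0)"
      by (rule sum.cong) (auto simp: Mx_entry i)
    also have "\<dots> = (\<Sum>x\<in>{0..<n}. if Mrel psi r i (psi x) then u x else 0)"
      using sum.permute[OF psi[unfolded atLeast0LessThan[symmetric]]] unfolding u_def by (simp add: o_def)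
    finally show ?thesis by simp
  qed
  have light: "u x = 0" if x: "x < n" "x \<notin> set r" for x
  proof -
    have "(\<Sum>y\<in>{0..<n}. if Mrel psi r x (psi y) then u y else 0) = (\<Sum>y\<in>{0..<n}. if y = x then u y else 0)"
      by (rule sum.cong) (auto simp: Mrel_psi[OF psi d] x)
    also have "\<dots> = u x" using x by simp
    finally show ?thesis using eq[OF x(1)] by simp
  qed
  have heavy: "(\<Sum>b<k - a. u (r ! b)) = 0" if a: "a < k" for a
  proof -
    have ra2: "r ! a \<in> set r" using a len by simp
    have ra: "r ! a < n" "r ! a \<in> set r" using ra2 sr by auto
    have "(\<Sum>y\<in>{0..<n}. if Mrel psi r (r ! a) (psi y) then u y else 0)
        = (\<Sum>y\<in>{0..<n}. if y \<in> set r \<and> a + idx r y < k then u y else 0)"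
      by (rule sum.cong) (auto simp: Mrel_psi[OF psi d] ra a len d light)
    also have "\<dots> = (\<Sum>y\<in>{y \<in> {0..<n}. y \<in> set r \<and> a + idx r y < k}. u y)"
      by (rule sum.inter_filter[symmetric]) simp
    also have "{y \<in> {0..<n}. y \<in> set r \<and> a + idx r y < k} = (\<lambda>b. r ! b) ` {..<k - a}"
    proof (rule equalityI; rule subsetI)
      fix y assume "y \<in> {y \<in> {0..<n}. y \<in> set r \<and> a + idx r y < k}"
      hence y: "y \<in> set r" "a + idx r y < k" by auto
      hence "idx r y \<in> {..<k - a}" "y = r ! idx r y" using idx_in[OF d y(1)] by auto
      thus "y \<in> (\<lambda>b. r ! b) ` {..<k - a}" by blast
    next
      fix y assume "y \<in> (\<lambda>b. r ! b) ` {..<k - a}"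
      then obtain b where b: "b < k - a" "y = r ! b" by auto
      have rb: "r ! b \<in> set r" using b len by simp
      have "r ! b < n" using rb sr by auto
      thus "y \<in> {y \<in> {0..<n}. y \<in> set r \<and> a + idx r y < k}" using b len d sr by auto
    qed
    also have "(\<Sum>y\<in>(\<lambda>b. r ! b) ` {..<k - a}. u y) = (\<Sum>b<k - a. u (r ! b))"
      by (rule sum.reindex_cong[OF _ refl]) (use d len in \<open>auto simp: inj_on_def nth_eq_iff_index_eq\<close>)
    finally show ?thesis using eq[OF ra(1)] by simp
  qed
  have hv: "u (r ! b) = 0" if "b < k" for b
  proof (rule prefix_sums_zero[of k, OF _ that])
    fix m assume m: "m \<le> k"
    show "(\<Sum>b<m. u (r ! b)) = 0"
    proof (cases "m = 0")
      case False
      hence "k - m < k" "k - (k - m) = m" using m by auto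
      thus ?thesis using heavy by metis
    qed simp
  qed
  have "u x = 0" if "x < n" for x
  proof (cases "x \<in> set r")
    case True thus ?thesis using hv idx_in[OF d True] len by metis
  qed (use light that in auto)
  hence "v = 0\<^sub>v n"
  proof -
    assume h: "\<And>x. x < n \<Longrightarrow> u x = 0"
    show "v = 0\<^sub>v n"
    proof (rule eq_vecI)
      fix j assume "j < dim_vec (0\<^sub>v n :: bit vec)"
      hence j: "j < n" by simp
      have "v $ j = u (pinv psi j)" unfolding u_def using psi by (simp add: permutes_inverses)
      thus "v $ j = 0\<^sub>v n $ j" using h[of "pinv psi j"] j psi by simp
    qed (use v in simp)
  qed
  thus False using v0 by simp
qed

lemma Mx_invertible:
  assumes P: "(psi, r) \<in> Par n k"
  shows "invertible_mat (Mx n psi r)"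
proof -
  have "Mx n psi r \<in> Units (ring_mat TYPE(bit) n ())"
    by (rule det_non_zero_imp_unit[OF Mx_carrier Mx_det[OF P]])
  then obtain B where B: "B \<in> carrier_mat n n" and "B * Mx n psi r = 1\<^sub>m n" "Mx n psi r * B = 1\<^sub>m n"
    unfolding Units_def ring_mat_simps by auto
  thus ?thesis unfolding invertible_mat_def inverts_mat_def square_mat.simps by auto
qed

lemma Mx_in_H:
  assumes P: "(psi, r) \<in> Par n k" and k: "k \<le> n"
  shows "Mx n psi r \<in> H n k"
  unfolding H_alt GL2_def using Mx_invertible[OF P] eta_Mx[OF P k] theta_Mx[OF P k] by simp

lemma staircase:
  fixes B :: "nat \<Rightarrow> nat \<Rightarrow> bool"
  assumes hr: "\<And>a. a < k \<Longrightarrow> card {b. b < k \<and> B a b} = k - a"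
    and hc: "\<And>b. b < k \<Longrightarrow> card {a. a < k \<and> B a b} = k - b"
  shows "a < k \<Longrightarrow> b < k \<Longrightarrow> B a b \<longleftrightarrow> a + b < k"
proof -
  have main: "a < k \<longrightarrow> {b. b < k \<and> B a b} = {b. b < k - a}" for a
  proof (induction a rule: less_induct)
    case (less a)
    show ?case
    proof
      assume a: "a < k"
      have notB: "\<not> B a b" if b: "b < k" "k - a \<le> b" for b
      proof -
        let ?S = "{a'. a' < k \<and> B a' b}"
        let ?T = "{a'. a' < k - b}"
        have TS: "?T \<subseteq> ?S"
        proof
          fix a' assume "a' \<in> ?T"
          hence a': "a' < k - b" by simp
          hence "a' < a" "a' < k" using b by auto
          hence "{c. c < k \<and> B a' c} = {c. c < k - a'}" using less.IH by blast
          moreover have "b < k - a'" using a' by simp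
          ultimately have "B a' b" using b by blast
          thus "a' \<in> ?S" using \<open>a' < k\<close> by simp
        qed
        have "card ?T = card ?S" using hc[OF b(1)] by simp
        hence "?T = ?S" using TS by (intro card_subset_eq) auto
        moreover have "a \<notin> ?T" using b by simp
        ultimately show ?thesis using a by blast
      qed
      have sub: "{b. b < k \<and> B a b} \<subseteq> {b. b < k - a}"
      proof
        fix b assume "b \<in> {b. b < k \<and> B a b}"
        hence "b < k" "B a b" by auto
        thus "b \<in> {b. b < k - a}" using notB by (metis mem_Collect_eq not_le)
      qed
      have "card {b. b < k \<and> B a b} = card {b. b < k - a}" using hr[OF a] by simp
      thus "{b. b < k \<and> B a b} = {b. b < k - a}" using sub by (intro card_subset_eq) auto
    qed
  qed
  assume a: "a < k" and b: "b < k"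
  have "B a b \<longleftrightarrow> b \<in> {b. b < k \<and> B a b}" using b by simp
  also have "\<dots> \<longleftrightarrow> b < k - a" using main a by simp
  finally show ?thesis by auto
qed

lemma row_sum_Mx_eq:
  assumes P: "(psi, r) \<in> Par n k" and k: "k \<le> n" and a: "a < k" and i: "i < n"
  shows "row_sum (Mx n psi r) i = n - a \<longleftrightarrow> i = r ! a"
proof -
  have psi: "psi permutes {..<n}" and len: "length r = k" and d: "distinct r" and sr: "set r \<subseteq> {..<n}"
    using P unfolding Par_def by auto
  show ?thesis
  proof (cases "i \<in> set r")
    case True
    have ix: "idx r i < k" "r ! idx r i = i" using idx_in[OF d True] len by auto
    have "n - idx r i = n - a \<longleftrightarrow> idx r i = a" using ix a k by auto
    also have "\<dots> \<longleftrightarrow> i = r ! a" using ix a len d by (metis idx_nth)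
    finally show ?thesis using True row_sum_Mx[OF P i] by simp
  next
    case False
    have "1 \<noteq> n - a"
    proof
      assume "1 = n - a"
      hence "k = n" using a k by simp
      hence "set r = {..<n}" using sr d len
        by (metis card_lessThan card_subset_eq distinct_card finite_lessThan)
      thus False using False i by simp
    qed
    moreover have "i \<noteq> r ! a" using False a len by auto
    ultimately show ?thesis using False row_sum_Mx[OF P i] by simp
  qed
qed

lemma Mx_inj:
  assumes P: "(psi, r) \<in> Par n k" and P': "(psi', r') \<in> Par n k" and k: "k \<le> n"
    and E: "Mx n psi r = Mx n psi' r'"
  shows "psi = psi' \<and> r = r'"
proof -
  have psi: "psi permutes {..<n}" and len: "length r = k" and d: "distinct r" and sr: "set r \<subseteq> {..<n}"
    using P unfolding Par_def by auto
  have psi': "psi' permutes {..<n}" and len': "length r' = k" and d': "distinct r'" and sr': "set r' \<subseteq> {..<n}"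
    using P' unfolding Par_def by auto
  have rr: "r = r'"
  proof (rule nth_equalityI)
    show "length r = length r'" using len len' by simp
    fix a assume "a < length r"
    hence a: "a < k" using len by simp
    have ra: "r ! a < n" using a len sr nth_mem by fastforce
    have "row_sum (Mx n psi r) (r ! a) = n - a" using row_sum_Mx_eq[OF P k a ra] by simp
    hence "row_sum (Mx n psi' r') (r ! a) = n - a" using E by simp
    thus "r ! a = r' ! a" using row_sum_Mx_eq[OF P' k a ra] by simp
  qed
  have "psi x = psi' x" for x
  proof (cases "x < n")
    case False thus ?thesis using psi psi' by (simp add: permutes_not_in)
  next
    case x: True
    show ?thesis
    proof (cases "x \<in> set r")
      case False
      have "Mx n psi r $$ (x, psi x) = 1" using x psi False by (simp add: Mx_entry Mrel_def)
      hence "Mx n psi' r' $$ (x, psi x) = 1" using E by simp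
      hence "Mrel psi' r' x (psi x)" using x psi by (simp add: Mx_entry split: if_splits)
      thus ?thesis using False rr unfolding Mrel_def by simp
    next
      case True
      let ?b = "idx r x"
      have b: "?b < k" "r ! ?b = x" using idx_in[OF d True] len by auto
      have px: "psi x < n" using x psi by simp
      have "col_sum (Mx n psi r) (psi x) = k - ?b" using col_sum_Mx[OF P px] True psi
        by (simp add: permutes_inverses)
      hence c: "col_sum (Mx n psi' r') (psi x) = k - ?b" using E by simp
      have m: "pinv psi' (psi x) \<in> set r'"
      proof (rule ccontr)
        assume "pinv psi' (psi x) \<notin> set r'"
        hence "col_sum (Mx n psi' r') (psi x) = k + 1" using col_sum_Mx[OF P' px] by simp
        thus False using c by simp
      qed
      have i2: "idx r' (pinv psi' (psi x)) < k" using idx_in[OF d' m] len' by simp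
      have "k - idx r' (pinv psi' (psi x)) = k - ?b" using col_sum_Mx[OF P' px] m c by simp
      hence "idx r' (pinv psi' (psi x)) = ?b" using i2 b by simp
      hence "pinv psi' (psi x) = x" using idx_in[OF d' m] b rr by metis
      thus ?thesis using psi' by (metis permutes_inverses(1))
    qed
  qed
  thus ?thesis using rr by auto
qed

lemma count_rows: "count (mset (map f [0..<n])) v = card {i \<in> {..<n}. f i = v}"
proof -
  have "count (mset (map f [0..<n])) v = (\<Sum>y\<in>f -` {v} \<inter> {..<n}. 1)"
    unfolding mset_rows_eq count_image_mset by (rule sum.cong) auto
  also have "\<dots> = card {i \<in> {..<n}. f i = v}" by (simp add: vimage_def Int_def conj_commute)
  finally show ?thesis .
qed

lemma bit_cases: "(x::bit) \<noteq> 1 \<longleftrightarrow> x = 0" by simp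

lemma inv_rows:
  assumes A: "A \<in> carrier_mat n n" and inv: "invertible_mat (A :: bit mat)"
    and i: "i < n" and i': "i' < n" and rw: "\<And>j. j < n \<Longrightarrow> A $$ (i, j) = A $$ (i', j)"
  shows "i = i'"
proof -
  obtain B where AB: "A * B = 1\<^sub>m n" using inv A unfolding invertible_mat_def inverts_mat_def by auto
  have dB: "dim_col B = n" using arg_cong[OF AB, of dim_col] by simp
  have "row A i = row A i'" using rw A i i' by (intro eq_vecI) auto
  hence "(A * B) $$ (i, i) = (A * B) $$ (i', i)" using A i i' dB by simp
  hence "(1 :: bit) = (if i' = i then 1 else 0)" unfolding AB using i i' by simp
  thus ?thesis by (simp split: if_splits)
qed

locale Hmat =
  fixes n k :: nat and A :: "bit mat"
  assumes k: "k \<le> n" and A: "A \<in> carrier_mat n n" and inv: "invertible_mat A"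
    and eta: "eta A = RL n k" and theta: "theta A = CL n k"
begin

abbreviation "rs \<equiv> row_sum A"
abbreviation "cs \<equiv> col_sum A"

lemma dims [simp]: "dim_row A = n" "dim_col A = n" using A by auto

lemma rs_card: "rs i = card {j \<in> {..<n}. A $$ (i, j) = 1}"
  unfolding row_sum_def dims by (rule sum_ind_card) simp

lemma cs_card: "cs j = card {i \<in> {..<n}. A $$ (i, j) = 1}"
  unfolding col_sum_def dims by (rule sum_ind_card) simp

lemma mset_rs: "mset (map rs [0..<n]) = mset (RL n k)"
  using arg_cong[OF eta, of mset] unfolding eta_def by simp

lemma mset_cs: "mset (map cs [0..<n]) = mset (CL n k)"
  using arg_cong[OF theta, of mset] unfolding theta_def by simp

lemma R1: assumes a: "a < k" shows "card {i \<in> {..<n}. rs i = n - a} = 1"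
proof -
  have "card {i \<in> {..<n}. rs i = n - a} = count (mset (RL n k)) (n - a)"
    using count_rows[of rs n "n - a"] mset_rs by simp
  also have "\<dots> = count (mset (map (\<lambda>i. n - i) [0..<k])) (n - a) + count (mset (replicate (n - k) 1)) (n - a)"
    unfolding RL_def by (simp only: mset_append count_union)
  also have "\<dots> = card {i \<in> {..<k}. n - i = n - a} + (if n - a = 1 then n - k else 0)"
    unfolding count_rows by simp
  also have "{i \<in> {..<k}. n - i = n - a} = {a}" using a k by auto
  also have "(if n - a = 1 then n - k else 0) = 0" using a k by auto
  finally show ?thesis by simp
qed

lemma R2: assumes i: "i < n" shows "(\<exists>a<k. rs i = n - a) \<or> rs i = 1"
proof -
  have "rs i \<in> set (map rs [0..<n])" using i by simp
  hence "rs i \<in> set (RL n k)" using mset_rs by (metis set_mset_mset)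
  thus ?thesis unfolding RL_def by (auto split: if_splits)
qed

lemma C1: assumes b: "b < k" shows "card {j \<in> {..<n}. cs j = k - b} = 1"
proof -
  have "card {j \<in> {..<n}. cs j = k - b} = count (mset (CL n k)) (k - b)"
    using count_rows[of cs n "k - b"] mset_cs by simp
  also have "\<dots> = count (mset (replicate (n - k) (k + 1))) (k - b) + count (mset (map (\<lambda>i. k - i) [0..<k])) (k - b)"
    unfolding CL_def by (simp only: mset_append count_union)
  also have "\<dots> = (if k - b = k + 1 then n - k else 0) + card {i \<in> {..<k}. k - i = k - b}"
    unfolding count_rows by simp
  also have "{i \<in> {..<k}. k - i = k - b} = {b}" using b by auto
  finally show ?thesis by simp
qed

lemma C2: assumes j: "j < n" shows "(\<exists>b<k. cs j = k - b) \<or> cs j = k + 1"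
proof -
  have "cs j \<in> set (map cs [0..<n])" using j by simp
  hence "cs j \<in> set (CL n k)" using mset_cs by (metis set_mset_mset)
  thus ?thesis unfolding CL_def by (auto split: if_splits)
qed

lemma card1_the: assumes "card {x \<in> S. P x} = 1"
  shows "(THE x. x \<in> S \<and> P x) \<in> S \<and> P (THE x. x \<in> S \<and> P x) \<and> (\<forall>y. y \<in> S \<and> P y \<longrightarrow> y = (THE x. x \<in> S \<and> P x))"
proof -
  obtain z where z: "{x \<in> S. P x} = {z}" using assms card_1_singletonE by blast
  hence ex: "\<forall>y. y \<in> S \<and> P y \<longleftrightarrow> y = z" by blast
  hence "(THE x. x \<in> S \<and> P x) = z" by simp
  thus ?thesis using ex by simp
qed

definition rr :: "nat \<Rightarrow> nat" where "rr a = (THE i. i \<in> {..<n} \<and> rs i = n - a)"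
definition cc :: "nat \<Rightarrow> nat" where "cc b = (THE j. j \<in> {..<n} \<and> cs j = k - b)"

lemma rr: assumes a: "a < k" shows "rr a < n" "rs (rr a) = n - a" "\<And>i. i < n \<Longrightarrow> rs i = n - a \<Longrightarrow> i = rr a"
  using card1_the[OF R1[OF a]] unfolding rr_def by auto

lemma cc: assumes b: "b < k" shows "cc b < n" "cs (cc b) = k - b" "\<And>j. j < n \<Longrightarrow> cs j = k - b \<Longrightarrow> j = cc b"
  using card1_the[OF C1[OF b]] unfolding cc_def by auto

lemma rr_inj: "a < k \<Longrightarrow> a' < k \<Longrightarrow> rr a = rr a' \<Longrightarrow> a = a'"
  using rr(2)[of a] rr(2)[of a'] k by fastforce

lemma cc_inj: "b < k \<Longrightarrow> b' < k \<Longrightarrow> cc b = cc b' \<Longrightarrow> b = b'"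
  using cc(2)[of b] cc(2)[of b'] by fastforce

definition r :: "nat list" where "r = map rr [0..<k]"

lemma r_len [simp]: "length r = k" unfolding r_def by simp
lemma r_nth [simp]: "a < k \<Longrightarrow> r ! a = rr a" unfolding r_def by simp
lemma r_dist: "distinct r"
  unfolding r_def distinct_map using rr_inj by (auto simp: inj_on_def)
lemma r_set: "set r = rr ` {..<k}" unfolding r_def by auto
lemma r_sub: "set r \<subseteq> {..<n}" unfolding r_set using rr(1) by auto
lemma idx_rr [simp]: "a < k \<Longrightarrow> idx r (rr a) = a" using idx_nth[OF r_dist, of a] by simp

lemma rr_idx: assumes "i \<in> set r" shows "rr (idx r i) = i"
proof -
  obtain a where "a < k" "i = rr a" using assms unfolding r_set by auto
  thus ?thesis by simp
qed

definition L :: "nat set" where "L = {..<n} - set r"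

lemma L_card: "card L = n - k" unfolding L_def using r_sub r_dist
  by (simp add: card_Diff_subset distinct_card)

lemma light_rs: assumes "i \<in> L" shows "rs i = 1"
proof -
  have i: "i < n" "i \<notin> set r" using assms unfolding L_def by auto
  { fix a assume a: "a < k" and e: "rs i = n - a"
    hence "i = rr a" using rr(3)[OF a i(1)] by simp
    hence False using i(2) a unfolding r_set by auto }
  thus ?thesis using R2[OF i(1)] by blast
qed

definition tau :: "nat \<Rightarrow> nat" where "tau i = (THE j. j \<in> {..<n} \<and> A $$ (i, j) = 1)"

lemma tau: assumes i: "i \<in> L"
  shows "tau i < n" "A $$ (i, tau i) = 1" "\<And>j. j < n \<Longrightarrow> A $$ (i, j) = 1 \<longleftrightarrow> j = tau i"
proof -
  have "card {j \<in> {..<n}. A $$ (i, j) = 1} = 1" using light_rs[OF i] rs_card by simp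
  from card1_the[OF this] show "tau i < n" "A $$ (i, tau i) = 1" "\<And>j. j < n \<Longrightarrow> A $$ (i, j) = 1 \<longleftrightarrow> j = tau i"
    unfolding tau_def by auto
qed

lemma tau_inj: "inj_on tau L"
proof (rule inj_onI)
  fix i i' assume i: "i \<in> L" and i': "i' \<in> L" and e: "tau i = tau i'"
  have "A $$ (i, j) = A $$ (i', j)" if j: "j < n" for j
  proof -
    have "A $$ (i, j) = 1 \<longleftrightarrow> A $$ (i', j) = 1" using tau(3)[OF i j] tau(3)[OF i' j] e by simp
    thus ?thesis by (metis bit_cases)
  qed
  moreover have "i < n" "i' < n" using i i' unfolding L_def by auto
  ultimately show "i = i'" using inv_rows[OF A inv] by blast
qed

definition J :: "nat set" where "J = {..<n} - cc ` {..<k}"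

lemma cc_img_card: "card (cc ` {..<k}) = k"
  using cc_inj by (subst card_image) (auto simp: inj_on_def)

lemma cc_sub: "cc ` {..<k} \<subseteq> {..<n}" using cc(1) by auto

lemma J_card: "card J = n - k" unfolding J_def using cc_sub cc_img_card
  by (simp add: card_Diff_subset finite_subset)

lemma J_cs: assumes "j \<in> J" shows "cs j = k + 1"
proof -
  have j: "j < n" "j \<notin> cc ` {..<k}" using assms unfolding J_def by auto
  { fix b assume b: "b < k" and e: "cs j = k - b"
    hence "j = cc b" using cc(3)[OF b j(1)] by simp
    hence False using j(2) b by auto }
  thus ?thesis using C2[OF j(1)] by blast
qed

lemma col_split: assumes j: "j < n"
  shows "cs j = card {i \<in> set r. A $$ (i, j) = 1} + card {i \<in> L. tau i = j}"
proof -
  have "{i \<in> {..<n}. A $$ (i, j) = 1} = {i \<in> set r. A $$ (i, j) = 1} \<union> {i \<in> L. A $$ (i, j) = 1}"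
    using r_sub unfolding L_def by auto
  moreover have "{i \<in> L. A $$ (i, j) = 1} = {i \<in> L. tau i = j}" using tau(3)[OF _ j] by auto
  ultimately have "{i \<in> {..<n}. A $$ (i, j) = 1} = {i \<in> set r. A $$ (i, j) = 1} \<union> {i \<in> L. tau i = j}" by simp
  moreover have "{i \<in> set r. A $$ (i, j) = 1} \<inter> {i \<in> L. tau i = j} = {}" unfolding L_def by auto
  ultimately show ?thesis unfolding cs_card by (simp add: card_Un_disjoint L_def)
qed

lemma tau_fiber: "card {i \<in> L. tau i = j} = (if j \<in> tau ` L then 1 else 0)"
proof (cases "j \<in> tau ` L")
  case True
  then obtain i where i: "i \<in> L" "j = tau i" by auto
  hence "{i' \<in> L. tau i' = j} = {i}" using tau_inj by (auto simp: inj_on_def)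
  thus ?thesis using True by simp
next
  case False
  hence e: "{i' \<in> L. tau i' = j} = {}" by auto
  show ?thesis unfolding e using False by simp
qed

lemma J_eq: "J = tau ` L"
proof -
  have sub: "J \<subseteq> tau ` L"
  proof
    fix j assume j: "j \<in> J"
    have "j < n" using j unfolding J_def by auto
    have "card {i \<in> set r. A $$ (i, j) = 1} \<le> card (set r)" by (rule card_mono) auto
    also have "card (set r) = k" using r_dist by (simp add: distinct_card)
    finally have "card {i \<in> L. tau i = j} \<noteq> 0" using col_split[OF \<open>j < n\<close>] J_cs[OF j] by linarith
    thus "j \<in> tau ` L" using tau_fiber[of j] by (simp split: if_splits)
  qed
  have "card (tau ` L) = card J" using tau_inj L_card J_card by (simp add: card_image)
  moreover have "finite (tau ` L)" unfolding L_def by simp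
  ultimately show ?thesis using sub by (intro card_subset_eq) auto
qed

lemma J_full: assumes j: "j \<in> J" and i: "i \<in> set r" shows "A $$ (i, j) = 1"
proof -
  have jn: "j < n" using j unfolding J_def by auto
  have "card {i \<in> set r. A $$ (i, j) = 1} = k"
    using col_split[OF jn] J_cs[OF j] tau_fiber[of j] J_eq j by simp
  also have "k = card (set r)" using r_dist by (simp add: distinct_card)
  finally have "{i \<in> set r. A $$ (i, j) = 1} = set r" by (intro card_subset_eq) auto
  thus ?thesis using i by blast
qed

lemma C_count: assumes b: "b < k" shows "card {a. a < k \<and> A $$ (rr a, cc b) = 1} = k - b"
proof -
  have cn: "cc b < n" using cc(1)[OF b] .
  have "cc b \<notin> J" unfolding J_def using b by auto
  hence "cc b \<notin> tau ` L" using J_eq by simp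
  hence "card {i \<in> set r. A $$ (i, cc b) = 1} = k - b"
    using col_split[OF cn] cc(2)[OF b] tau_fiber[of "cc b"] by simp
  moreover have "card {i \<in> set r. A $$ (i, cc b) = 1} = card {a. a < k \<and> A $$ (rr a, cc b) = 1}"
  proof -
    have "{i \<in> set r. A $$ (i, cc b) = 1} = {i \<in> set r. A $$ (rr (idx r i), cc b) = 1}"
      using rr_idx by auto
    thus ?thesis using card_set_idx[OF r_dist, of "\<lambda>a. A $$ (rr a, cc b) = 1"] by simp
  qed
  ultimately show ?thesis by simp
qed

end

context Hmat begin

lemma R_count: assumes a: "a < k" shows "card {b. b < k \<and> A $$ (rr a, cc b) = 1} = k - a"
proof -
  have ra: "rr a \<in> set r" using a unfolding r_set by auto
  have "{j \<in> {..<n}. A $$ (rr a, j) = 1} = J \<union> cc ` {b. b < k \<and> A $$ (rr a, cc b) = 1}"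
  proof (rule equalityI; rule subsetI)
    fix j assume "j \<in> {j \<in> {..<n}. A $$ (rr a, j) = 1}"
    thus "j \<in> J \<union> cc ` {b. b < k \<and> A $$ (rr a, cc b) = 1}" unfolding J_def by auto
  next
    fix j assume "j \<in> J \<union> cc ` {b. b < k \<and> A $$ (rr a, cc b) = 1}"
    thus "j \<in> {j \<in> {..<n}. A $$ (rr a, j) = 1}" using J_full[OF _ ra] cc(1) unfolding J_def by auto
  qed
  moreover have "J \<inter> cc ` {b. b < k \<and> A $$ (rr a, cc b) = 1} = {}" unfolding J_def by auto
  moreover have "card (cc ` {b. b < k \<and> A $$ (rr a, cc b) = 1}) = card {b. b < k \<and> A $$ (rr a, cc b) = 1}"
    using cc_inj by (intro card_image) (auto simp: inj_on_def)
  moreover have "finite J" unfolding J_def by simp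
  ultimately have "rs (rr a) = (n - k) + card {b. b < k \<and> A $$ (rr a, cc b) = 1}"
    unfolding rs_card J_card[symmetric] by (simp add: card_Un_disjoint)
  thus ?thesis using rr(2)[OF a] a k by simp
qed

lemma stair: "a < k \<Longrightarrow> b < k \<Longrightarrow> A $$ (rr a, cc b) = 1 \<longleftrightarrow> a + b < k"
  by (rule staircase[where B = "\<lambda>a b. A $$ (rr a, cc b) = 1"]) (auto simp: R_count C_count)

definition psi :: "nat \<Rightarrow> nat" where
  "psi i = (if i \<in> L then tau i else if i \<in> set r then cc (idx r i) else i)"

lemma psi_L: "i \<in> L \<Longrightarrow> psi i = tau i" unfolding psi_def by simp
lemma psi_r: "i \<in> set r \<Longrightarrow> psi i = cc (idx r i)" unfolding psi_def L_def by auto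
lemma psi_rr: "a < k \<Longrightarrow> psi (rr a) = cc a" using psi_r[of "rr a"] unfolding r_set by auto

lemma psi_perm: "psi permutes {..<n}"
proof (rule bij_imp_permutes)
  have img: "psi ` {..<n} \<subseteq> {..<n}"
  proof
    fix y assume "y \<in> psi ` {..<n}"
    then obtain i where i: "i < n" "y = psi i" by auto
    show "y \<in> {..<n}"
    proof (cases "i \<in> set r")
      case True
      thus ?thesis using i psi_r cc(1) idx_in[OF r_dist True] by auto
    next
      case False
      hence "i \<in> L" using i unfolding L_def by auto
      thus ?thesis using i psi_L tau(1) by auto
    qed
  qed
  have inj: "inj_on psi {..<n}"
  proof (rule inj_onI)
    fix x y assume x: "x \<in> {..<n}" and y: "y \<in> {..<n}" and e: "psi x = psi y"
    have cases: "\<And>z. z \<in> {..<n} \<Longrightarrow> z \<in> L \<or> z \<in> set r" unfolding L_def by auto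
    have tJ: "z \<in> L \<Longrightarrow> psi z \<in> J" for z using psi_L J_eq by auto
    have cJ: "z \<in> set r \<Longrightarrow> psi z \<notin> J" for z
      using psi_r idx_in[OF r_dist] unfolding J_def by auto
    show "x = y"
    proof (cases "x \<in> L")
      case xL: True
      hence yL: "y \<in> L" using cases[OF y] tJ cJ e by metis
      show ?thesis using tau_inj xL yL e psi_L by (metis inj_on_def)
    next
      case False
      hence xr: "x \<in> set r" using cases[OF x] by blast
      hence yr: "y \<in> set r" using cases[OF y] tJ cJ e by metis
      have "cc (idx r x) = cc (idx r y)" using e psi_r xr yr by simp
      hence "idx r x = idx r y" using cc_inj idx_in[OF r_dist xr] idx_in[OF r_dist yr] by simp
      thus ?thesis using idx_in[OF r_dist xr] idx_in[OF r_dist yr] by metis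
    qed
  qed
  have "psi ` {..<n} = {..<n}" using img inj by (intro endo_inj_surj) auto
  thus "bij_betw psi {..<n} {..<n}" using inj unfolding bij_betw_def by simp
next
  fix x assume "x \<notin> {..<n}"
  hence "x \<notin> L" "x \<notin> set r" using r_sub unfolding L_def by auto
  thus "psi x = x" unfolding psi_def by simp
qed

lemma Par_mem: "(psi, r) \<in> Par n k"
  unfolding Par_def using psi_perm r_dist r_sub by simp

lemma A_eq: "A = Mx n psi r"
proof (rule eq_matI)
  fix i j assume "i < dim_row (Mx n psi r)" "j < dim_col (Mx n psi r)"
  hence i: "i < n" and j: "j < n" by auto
  have "A $$ (i, j) = 1 \<longleftrightarrow> Mrel psi r i j"
  proof (cases "i \<in> set r")
    case False
    hence iL: "i \<in> L" using i unfolding L_def by auto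
    show ?thesis unfolding Mrel_def using False tau(3)[OF iL j] psi_L[OF iL] by simp
  next
    case True
    then obtain a where a: "a < k" and ia: "i = rr a" unfolding r_set by auto
    have Mr: "Mrel psi r i j \<longleftrightarrow> (\<forall>b<k. j \<noteq> cc b \<or> a + b < k)"
      unfolding Mrel_def using True ia a psi_rr by simp
    show ?thesis
    proof (cases "j \<in> J")
      case True
      hence "\<forall>b<k. j \<noteq> cc b" unfolding J_def by auto
      thus ?thesis using Mr J_full[OF True \<open>i \<in> set r\<close>] by simp
    next
      case False
      then obtain b where b: "b < k" and jb: "j = cc b" using j unfolding J_def by auto
      have "(\<forall>b'<k. j \<noteq> cc b' \<or> a + b' < k) \<longleftrightarrow> a + b < k"
        using cc_inj b jb by auto
      thus ?thesis using Mr stair[OF a b] ia jb by simp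
    qed
  qed
  thus "A $$ (i, j) = Mx n psi r $$ (i, j)" using i j by (simp add: Mx_entry bit_cases[symmetric])
qed auto

end

lemma H_char:
  assumes k: "k \<le> n"
  shows "H n k = (\<lambda>(psi, r). Mx n psi r) ` Par n k"
proof (rule equalityI; rule subsetI)
  fix A assume "A \<in> H n k"
  hence "Hmat n k A" unfolding H_alt GL2_def using k by unfold_locales auto
  then interpret Hmat n k A .
  show "A \<in> (\<lambda>(psi, r). Mx n psi r) ` Par n k" using Par_mem A_eq by force
next
  fix A assume "A \<in> (\<lambda>(psi, r). Mx n psi r) ` Par n k"
  then obtain psi r where "(psi, r) \<in> Par n k" "A = Mx n psi r" by auto
  thus "A \<in> H n k" using Mx_in_H k by simp
qed

definition Pn :: "nat \<Rightarrow> (nat \<Rightarrow> nat) set" where "Pn n = {p. p permutes {..<n}}"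
definition cl :: "nat \<Rightarrow> (nat \<Rightarrow> nat) \<Rightarrow> (nat \<Rightarrow> nat) set" where
  "cl n p = {s \<circ> p \<circ> pinv s | s. s permutes {..<n}}"
definition cent :: "nat \<Rightarrow> (nat \<Rightarrow> nat) \<Rightarrow> (nat \<Rightarrow> nat) set" where
  "cent n p = {u. u permutes {..<n} \<and> u \<circ> p = p \<circ> u}"
definition fixpts :: "nat \<Rightarrow> (nat \<Rightarrow> nat) \<Rightarrow> nat set" where
  "fixpts n p = {i. i < n \<and> p i = i}"

lemma finite_Pn: "finite (Pn n)" unfolding Pn_def by (rule finite_permutations) simp
lemma card_Pn: "card (Pn n) = fact n" unfolding Pn_def by (rule card_permutations) auto

lemma conj_perm: "s permutes S \<Longrightarrow> p permutes S \<Longrightarrow> s \<circ> p \<circ> pinv s permutes S"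
  by (intro permutes_compose permutes_inv) auto

lemma pinv_comp: "s permutes S \<Longrightarrow> t permutes S \<Longrightarrow> pinv (s \<circ> t) = pinv t \<circ> pinv s"
  by (simp add: o_inv_distrib permutes_bij)

lemma conj_conj: "s permutes S \<Longrightarrow> t permutes S \<Longrightarrow>
   t \<circ> (s \<circ> p \<circ> pinv s) \<circ> pinv t = (t \<circ> s) \<circ> p \<circ> pinv (t \<circ> s)"
  by (simp add: pinv_comp o_assoc)

lemma conj_classes_eq: "conj_classes n = cl n ` Pn n"
  unfolding conj_classes_def cl_def Pn_def by simp

lemma cl_self: "p \<in> Pn n \<Longrightarrow> p \<in> cl n p"
  unfolding cl_def Pn_def
  by (rule CollectI, rule exI[of _ id]) (auto simp: permutes_id)

lemma cl_sub: "p \<in> Pn n \<Longrightarrow> cl n p \<subseteq> Pn n"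
  unfolding cl_def Pn_def using conj_perm by blast

lemma cl_mem: assumes p: "p \<in> Pn n" and q: "q \<in> cl n p" shows "cl n q = cl n p"
proof -
  obtain s where s: "s permutes {..<n}" and qs: "q = s \<circ> p \<circ> pinv s" using q unfolding cl_def by blast
  show ?thesis
  proof
    show "cl n q \<subseteq> cl n p"
    proof
      fix x assume "x \<in> cl n q"
      then obtain t where t: "t permutes {..<n}" and x: "x = t \<circ> q \<circ> pinv t" unfolding cl_def by blast
      have "x = (t \<circ> s) \<circ> p \<circ> pinv (t \<circ> s)" unfolding x qs using conj_conj[OF s t] by simp
      moreover have "t \<circ> s permutes {..<n}" using s t by (rule permutes_compose)
      ultimately show "x \<in> cl n p" unfolding cl_def by blast
    qed
  next
    show "cl n p \<subseteq> cl n q"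
    proof
      fix x assume "x \<in> cl n p"
      then obtain t where t: "t permutes {..<n}" and x: "x = t \<circ> p \<circ> pinv t" unfolding cl_def by blast
      have si: "pinv s permutes {..<n}" using s by (rule permutes_inv)
      have "(t \<circ> pinv s) \<circ> q \<circ> pinv (t \<circ> pinv s) = (t \<circ> pinv s \<circ> s) \<circ> p \<circ> pinv (t \<circ> pinv s \<circ> s)"
        unfolding qs using conj_conj[OF s permutes_compose[OF si t]] by (simp add: o_assoc)
      also have "t \<circ> pinv s \<circ> s = t" using permutes_inv_o(2)[OF s] by (simp add: o_assoc[symmetric])
      finally have "x = (t \<circ> pinv s) \<circ> q \<circ> pinv (t \<circ> pinv s)" unfolding x by (rule sym)
      moreover have "t \<circ> pinv s permutes {..<n}" using si t by (rule permutes_compose)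
      ultimately show "x \<in> cl n q" unfolding cl_def by blast
    qed
  qed
qed

lemma fiber_eq:
  assumes p: "p \<in> Pn n" and t: "t permutes {..<n}"
  shows "{s \<in> Pn n. s \<circ> p \<circ> pinv s = t \<circ> p \<circ> pinv t} = (\<lambda>u. t \<circ> u) ` cent n p"
proof (rule equalityI; rule subsetI)
  fix s assume "s \<in> {s \<in> Pn n. s \<circ> p \<circ> pinv s = t \<circ> p \<circ> pinv t}"
  hence s: "s permutes {..<n}" and e: "s \<circ> p \<circ> pinv s = t \<circ> p \<circ> pinv t" unfolding Pn_def by auto
  let ?u = "pinv t \<circ> s"
  have ti: "pinv t permutes {..<n}" using t by (rule permutes_inv)
  have u: "?u permutes {..<n}" using s ti by (rule permutes_compose)
  have "?u \<circ> p = p \<circ> ?u"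
  proof -
    have "pinv t \<circ> (s \<circ> p \<circ> pinv s) \<circ> s = pinv t \<circ> (t \<circ> p \<circ> pinv t) \<circ> s" using e by simp
    moreover have "pinv t \<circ> (s \<circ> p \<circ> pinv s) \<circ> s = ?u \<circ> p"
      by (simp add: fun_eq_iff permutes_inverses[OF s])
    moreover have "pinv t \<circ> (t \<circ> p \<circ> pinv t) \<circ> s = p \<circ> ?u"
      by (simp add: fun_eq_iff permutes_inverses[OF t])
    ultimately show ?thesis by simp
  qed
  hence "?u \<in> cent n p" using u unfolding cent_def by simp
  moreover have "s = t \<circ> ?u" by (simp add: fun_eq_iff permutes_inverses[OF t])
  ultimately show "s \<in> (\<lambda>u. t \<circ> u) ` cent n p" by blast
next
  fix s assume "s \<in> (\<lambda>u. t \<circ> u) ` cent n p"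
  then obtain u where u: "u permutes {..<n}" and c: "u \<circ> p = p \<circ> u" and s: "s = t \<circ> u"
    unfolding cent_def by blast
  have sp: "s permutes {..<n}" unfolding s using u t by (rule permutes_compose)
  have "s \<circ> p \<circ> pinv s = t \<circ> (u \<circ> p) \<circ> pinv u \<circ> pinv t"
    unfolding s pinv_comp[OF t u] by (simp add: o_assoc)
  also have "\<dots> = t \<circ> p \<circ> (u \<circ> pinv u) \<circ> pinv t" unfolding c by (simp add: o_assoc)
  also have "\<dots> = t \<circ> p \<circ> pinv t" using permutes_inv_o(1)[OF u] by simp
  finally have E: "s \<circ> p \<circ> pinv s = t \<circ> p \<circ> pinv t" .
  show "s \<in> {s \<in> Pn n. s \<circ> p \<circ> pinv s = t \<circ> p \<circ> pinv t}" using sp E unfolding Pn_def by blast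
qed

lemma orbit_stab:
  assumes p: "p \<in> Pn n"
  shows "card (cl n p) * card (cent n p) = fact n"
proof -
  let ?f = "\<lambda>s. s \<circ> p \<circ> pinv s"
  have img: "?f ` Pn n = cl n p" unfolding cl_def Pn_def by blast
  have "fact n = card (Pn n)" by (simp add: card_Pn)
  also have "\<dots> = (\<Sum>x\<in>?f ` Pn n. card {s \<in> Pn n. ?f s = x})"
    unfolding card_eq_sum by (rule sum.image_gen[OF finite_Pn])
  also have "\<dots> = (\<Sum>x\<in>cl n p. card (cent n p))"
  proof (rule sum.cong)
    fix x assume "x \<in> cl n p"
    then obtain t where t: "t permutes {..<n}" and x: "x = ?f t" unfolding cl_def by blast
    have inj: "inj_on (\<lambda>u. t \<circ> u) (cent n p)"
    proof (rule inj_onI)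
      fix u v assume "t \<circ> u = t \<circ> v"
      hence "pinv t \<circ> (t \<circ> u) = pinv t \<circ> (t \<circ> v)" by (rule arg_cong)
      hence "pinv t \<circ> t \<circ> u = pinv t \<circ> t \<circ> v" by (simp only: o_assoc)
      thus "u = v" using permutes_inv_o(2)[OF t] by simp
    qed
    show "card {s \<in> Pn n. ?f s = x} = card (cent n p)"
      unfolding x fiber_eq[OF p t] using inj by (rule card_image)
  qed (simp add: img)
  finally show ?thesis by simp
qed

definition ysets :: "nat \<Rightarrow> int list \<Rightarrow> (nat \<Rightarrow> nat) \<Rightarrow> (nat \<Rightarrow> nat) set" where
  "ysets n alpha p = {f \<in> {..<n} \<rightarrow>\<^sub>E {..<length alpha}.
        (\<forall>i<n. f (p i) = f i) \<and>
        (\<forall>t<length alpha. int (card {i\<in>{..<n}. f i = t}) = alpha ! t)}"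

lemma card_level_perm:
  fixes s :: "nat \<Rightarrow> nat"
  assumes s: "s permutes {..<n}"
  shows "card {i\<in>{..<n}. f (s i) = t} = card {i\<in>{..<n}. f i = t}"
proof -
  have img: "s ` {i\<in>{..<n}. f (s i) = t} = {i\<in>{..<n}. f i = t}"
  proof (rule equalityI; rule subsetI)
    fix x assume "x \<in> s ` {i\<in>{..<n}. f (s i) = t}"
    thus "x \<in> {i\<in>{..<n}. f i = t}" using s by (auto simp: permutes_in_image)
  next
    fix x assume x: "x \<in> {i\<in>{..<n}. f i = t}"
    have "pinv s x \<in> {i\<in>{..<n}. f (s i) = t}"
      using x s by (auto simp: permutes_inverses permutes_in_image[OF permutes_inv[OF s]])
    moreover have "x = s (pinv s x)" using s by (simp add: permutes_inverses)
    ultimately show "x \<in> s ` {i\<in>{..<n}. f (s i) = t}" by blast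
  qed
  have inj: "inj_on s {i\<in>{..<n}. f (s i) = t}" using permutes_inj[OF s] by (rule inj_on_subset) simp
  have "card (s ` {i\<in>{..<n}. f (s i) = t}) = card {i\<in>{..<n}. f (s i) = t}" by (rule card_image[OF inj])
  thus ?thesis unfolding img by (rule sym)
qed

lemma ysets_map:
  assumes s: "s permutes {..<n}" and p: "p permutes {..<n}"
    and f: "f \<in> ysets n alpha (s \<circ> p \<circ> pinv s)"
  shows "restrict (f \<circ> s) {..<n} \<in> ysets n alpha p"
proof -
  have sl: "i < n \<Longrightarrow> s i < n" for i using s by (metis lessThan_iff permutes_in_image)
  have pl: "i < n \<Longrightarrow> p i < n" for i using p by (metis lessThan_iff permutes_in_image)
  have f1: "f \<in> {..<n} \<rightarrow>\<^sub>E {..<length alpha}" and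
    f2: "\<forall>i<n. f ((s \<circ> p \<circ> pinv s) i) = f i" and
    f3: "\<forall>t<length alpha. int (card {i\<in>{..<n}. f i = t}) = alpha ! t" using f unfolding ysets_def by auto
  have "restrict (f \<circ> s) {..<n} \<in> {..<n} \<rightarrow>\<^sub>E {..<length alpha}" using f1 sl by auto
  moreover have "\<forall>i<n. restrict (f \<circ> s) {..<n} (p i) = restrict (f \<circ> s) {..<n} i"
  proof (intro allI impI)
    fix i assume i: "i < n"
    have "f (s (p i)) = f ((s \<circ> p \<circ> pinv s) (s i))" using s by (simp add: permutes_inverses)
    also have "\<dots> = f (s i)" using f2 sl[OF i] by blast
    finally show "restrict (f \<circ> s) {..<n} (p i) = restrict (f \<circ> s) {..<n} i" using i pl[OF i] by simp
  qed
  moreover have "\<forall>t<length alpha. int (card {i\<in>{..<n}. restrict (f \<circ> s) {..<n} i = t}) = alpha ! t"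
  proof (intro allI impI)
    fix t assume t: "t < length alpha"
    have "{i\<in>{..<n}. restrict (f \<circ> s) {..<n} i = t} = {i\<in>{..<n}. f (s i) = t}" by auto
    thus "int (card {i\<in>{..<n}. restrict (f \<circ> s) {..<n} i = t}) = alpha ! t"
      using card_level_perm[OF s, of f t] f3 t by simp
  qed
  ultimately show ?thesis unfolding ysets_def by blast
qed

lemma young_char_conj:
  assumes s: "s permutes {..<n}" and p: "p permutes {..<n}"
  shows "young_char n alpha (s \<circ> p \<circ> pinv s) = young_char n alpha p"
proof -
  have si: "pinv s permutes {..<n}" using s by (rule permutes_inv)
  have q: "s \<circ> p \<circ> pinv s permutes {..<n}" using s p by (rule conj_perm)
  have bk: "pinv s \<circ> (s \<circ> p \<circ> pinv s) \<circ> pinv (pinv s) = p"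
    using s by (simp add: fun_eq_iff permutes_inverses permutes_inv_inv)
  have "bij_betw (\<lambda>f. restrict (f \<circ> s) {..<n}) (ysets n alpha (s \<circ> p \<circ> pinv s)) (ysets n alpha p)"
  proof (rule bij_betw_byWitness[where f'="\<lambda>g. restrict (g \<circ> pinv s) {..<n}"])
    show "\<forall>a\<in>ysets n alpha (s \<circ> p \<circ> pinv s). restrict (restrict (a \<circ> s) {..<n} \<circ> pinv s) {..<n} = a"
    proof
      fix a assume a: "a \<in> ysets n alpha (s \<circ> p \<circ> pinv s)"
      hence ae: "a \<in> extensional {..<n}" unfolding ysets_def by (auto simp: PiE_def)
      show "restrict (restrict (a \<circ> s) {..<n} \<circ> pinv s) {..<n} = a"
      proof (rule extensionalityI[OF _ ae])
        show "restrict (restrict (a \<circ> s) {..<n} \<circ> pinv s) {..<n} \<in> extensional {..<n}" by simp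
        fix x assume x: "x \<in> {..<n}"
        have "pinv s x \<in> {..<n}" using x si by (simp add: permutes_in_image)
        thus "restrict (restrict (a \<circ> s) {..<n} \<circ> pinv s) {..<n} x = a x"
          using x s by (simp add: permutes_inverses)
      qed
    qed
    show "\<forall>a\<in>ysets n alpha p. restrict (restrict (a \<circ> pinv s) {..<n} \<circ> s) {..<n} = a"
    proof
      fix a assume a: "a \<in> ysets n alpha p"
      hence ae: "a \<in> extensional {..<n}" unfolding ysets_def by (auto simp: PiE_def)
      show "restrict (restrict (a \<circ> pinv s) {..<n} \<circ> s) {..<n} = a"
      proof (rule extensionalityI[OF _ ae])
        show "restrict (restrict (a \<circ> pinv s) {..<n} \<circ> s) {..<n} \<in> extensional {..<n}" by simp
        fix x assume x: "x \<in> {..<n}"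
        have "s x \<in> {..<n}" using x s by (simp add: permutes_in_image)
        thus "restrict (restrict (a \<circ> pinv s) {..<n} \<circ> s) {..<n} x = a x"
          using x s by (simp add: permutes_inverses)
      qed
    qed
    show "(\<lambda>f. restrict (f \<circ> s) {..<n}) ` ysets n alpha (s \<circ> p \<circ> pinv s) \<subseteq> ysets n alpha p"
      using ysets_map[OF s p] by (rule image_subsetI)
    show "(\<lambda>g. restrict (g \<circ> pinv s) {..<n}) ` ysets n alpha p \<subseteq> ysets n alpha (s \<circ> p \<circ> pinv s)"
    proof (rule image_subsetI)
      fix g assume "g \<in> ysets n alpha p"
      hence "g \<in> ysets n alpha (pinv s \<circ> (s \<circ> p \<circ> pinv s) \<circ> pinv (pinv s))" unfolding bk .
      thus "restrict (g \<circ> pinv s) {..<n} \<in> ysets n alpha (s \<circ> p \<circ> pinv s)" by (rule ysets_map[OF si q])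
    qed
  qed
  hence "card (ysets n alpha (s \<circ> p \<circ> pinv s)) = card (ysets n alpha p)" by (rule bij_betw_same_card)
  moreover have yc: "young_char n alpha q = (if \<exists>a\<in>set alpha. a < 0 then 0 else of_nat (card (ysets n alpha q)))" for q
    unfolding young_char_def ysets_def by (rule refl)
  ultimately show ?thesis by (simp only: yc)
qed

lemma irr_char_conj:
  assumes s: "s permutes {..<n}" and p: "p permutes {..<n}"
  shows "irr_char n lam (s \<circ> p \<circ> pinv s) = irr_char n lam p"
  unfolding irr_char_def young_char_conj[OF s p] ..

lemma young_char_real: "cnj (young_char n a p) = young_char n a p"
  unfolding young_char_def by simp

lemma irr_char_real: "cnj (irr_char n lam p) = irr_char n lam p"
  unfolding irr_char_def by (simp add: young_char_real)

lemma fix_conj: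
  assumes s: "s permutes {..<n}" and p: "p permutes {..<n}"
  shows "card (fixpts n (s \<circ> p \<circ> pinv s)) = card (fixpts n p)"
proof -
  have "s ` fixpts n p = fixpts n (s \<circ> p \<circ> pinv s)"
  proof (rule equalityI; rule subsetI)
    fix x assume "x \<in> s ` fixpts n p"
    then obtain i where i: "i < n" "p i = i" and x: "x = s i" unfolding fixpts_def by blast
    have "(s \<circ> p \<circ> pinv s) x = x" unfolding x using i(2) by (simp add: permutes_inverses[OF s])
    thus "x \<in> fixpts n (s \<circ> p \<circ> pinv s)" unfolding fixpts_def using i s x by simp
  next
    fix x assume "x \<in> fixpts n (s \<circ> p \<circ> pinv s)"
    hence x: "x < n" and e: "s (p (pinv s x)) = x" unfolding fixpts_def by auto
    have "p (pinv s x) = pinv s x" using arg_cong[OF e, of "pinv s"] by (simp add: permutes_inverses[OF s])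
    hence "pinv s x \<in> fixpts n p" unfolding fixpts_def using x s by simp
    moreover have "x = s (pinv s x)" by (simp add: permutes_inverses[OF s])
    ultimately show "x \<in> s ` fixpts n p" by blast
  qed
  moreover have inj: "inj_on s (fixpts n p)" using permutes_inj[OF s] by (rule inj_on_subset) simp
  ultimately show ?thesis using card_image[OF inj] by simp
qed

lemma cent_conj:
  assumes s: "s permutes {..<n}" and p: "p permutes {..<n}"
  shows "card (cent n (s \<circ> p \<circ> pinv s)) = card (cent n p)"
proof -
  have pP: "p \<in> Pn n" using p unfolding Pn_def by simp
  have qc: "s \<circ> p \<circ> pinv s \<in> cl n p" using s unfolding cl_def by blast
  have qP: "s \<circ> p \<circ> pinv s \<in> Pn n" using conj_perm[OF s p] unfolding Pn_def by simp
  have e: "cl n (s \<circ> p \<circ> pinv s) = cl n p" by (rule cl_mem[OF pP qc])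
  have o1: "card (cl n p) * card (cent n (s \<circ> p \<circ> pinv s)) = fact n"
    using orbit_stab[OF qP] unfolding e .
  have E: "card (cl n p) * card (cent n (s \<circ> p \<circ> pinv s)) = card (cl n p) * card (cent n p)"
    unfolding o1 orbit_stab[OF pP] ..
  have fin: "finite (cl n p)" using cl_sub[OF pP] finite_Pn by (rule finite_subset)
  have nz: "card (cl n p) \<noteq> 0" using cl_self[OF pP] fin by auto
  show ?thesis using mult_left_cancel[OF nz] E by blast
qed

lemma map_id_iff: "map f xs = xs \<longleftrightarrow> (\<forall>x\<in>set xs. f x = x)"
  by (induct xs) auto

lemma falling_Suc: "falling m (Suc k) = falling m k * (m - k)"
  unfolding falling_def by simp

lemma prod_interval_falling: "k \<le> m \<Longrightarrow> \<Prod>{m - k + 1..m} = falling m k"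
proof (induction k)
  case 0 thus ?case unfolding falling_def by simp
next
  case (Suc k)
  have e: "{m - Suc k + 1..m} = insert (m - k) {m - k + 1..m}" using Suc.prems by auto
  have "\<Prod>{m - Suc k + 1..m} = (m - k) * \<Prod>{m - k + 1..m}" unfolding e by simp
  also have "\<dots> = falling m (Suc k)" using Suc by (simp add: falling_Suc)
  finally show ?case .
qed

lemma card_inj_lists:
  assumes S: "finite S"
  shows "card {xs. length xs = k \<and> distinct xs \<and> set xs \<subseteq> S} = falling (card S) k"
proof (cases "k \<le> card S")
  case True
  thus ?thesis using card_lists_distinct_length_eq[OF S True] prod_interval_falling[OF True] by simp
next
  case False
  have em: "{xs. length xs = k \<and> distinct xs \<and> set xs \<subseteq> S} = {}"
  proof (rule ccontr)
    assume "{xs. length xs = k \<and> distinct xs \<and> set xs \<subseteq> S} \<noteq> {}"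
    then obtain xs where xs: "length xs = k" "distinct xs" "set xs \<subseteq> S" by auto
    have "k \<le> card S" using card_mono[OF S xs(3)] xs by (simp add: distinct_card)
    thus False using False by simp
  qed
  moreover have "falling (card S) k = 0"
    unfolding falling_def using False by (intro prod_zero) (auto intro: bexI[of _ "card S"])
  thus ?thesis unfolding em by simp
qed

lemma FIX:
  assumes pP: "p \<in> Pn n" and k: "k \<le> n"
  shows "card {A \<in> H n k. conj_act n p A = A} = card (cent n p) * falling (card (fixpts n p)) k"
proof -
  have p: "p permutes {..<n}" using pP unfolding Pn_def by simp
  let ?M = "\<lambda>x. Mx n (fst x) (snd x)"
  let ?act = "\<lambda>x. (p \<circ> fst x \<circ> pinv p, map p (snd x))"
  have Hc: "H n k = ?M ` Par n k" unfolding H_char[OF k] by (simp add: case_prod_beta)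
  have inj: "inj_on ?M (Par n k)"
    using Mx_inj[OF _ _ k] by (auto simp: inj_on_def)
  have actP: "?act x \<in> Par n k" if x: "x \<in> Par n k" for x
  proof -
    obtain psi r where xe: "x = (psi, r)" by (cases x)
    have psi: "psi permutes {..<n}" and len: "length r = k" and d: "distinct r" and sr: "set r \<subseteq> {..<n}"
      using x xe unfolding Par_def by auto
    have "p \<circ> psi \<circ> pinv p permutes {..<n}" using p psi by (rule conj_perm)
    moreover have "distinct (map p r)" using d permutes_inj[OF p] by (simp add: distinct_map inj_on_def)
    moreover have "set (map p r) \<subseteq> {..<n}" using sr p by auto
    ultimately show ?thesis unfolding xe Par_def using len by simp
  qed
  have conjM: "conj_act n p (?M x) = ?M (?act x)" if x: "x \<in> Par n k" for x
    using conj_Mx[OF p] x unfolding Par_def by (auto simp: case_prod_beta)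
  have "{A \<in> H n k. conj_act n p A = A} = ?M ` {x \<in> Par n k. ?act x = x}"
  proof (rule equalityI; rule subsetI)
    fix A assume "A \<in> {A \<in> H n k. conj_act n p A = A}"
    then obtain x where x: "x \<in> Par n k" and A: "A = ?M x" and c: "conj_act n p A = A" unfolding Hc by auto
    have "?M (?act x) = ?M x" using c conjM[OF x] A by simp
    hence "?act x = x" using inj actP[OF x] x by (auto simp: inj_on_def)
    thus "A \<in> ?M ` {x \<in> Par n k. ?act x = x}" using x A by auto
  next
    fix A assume "A \<in> ?M ` {x \<in> Par n k. ?act x = x}"
    then obtain x where x: "x \<in> Par n k" and A: "A = ?M x" and f: "?act x = x" by auto
    have "conj_act n p A = A" using conjM[OF x] f A by simp
    thus "A \<in> {A \<in> H n k. conj_act n p A = A}" using x A unfolding Hc by auto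
  qed
  hence "card {A \<in> H n k. conj_act n p A = A} = card {x \<in> Par n k. ?act x = x}"
    using inj by (simp add: card_image inj_on_subset)
  also have "{x \<in> Par n k. ?act x = x} = cent n p \<times> {xs. length xs = k \<and> distinct xs \<and> set xs \<subseteq> fixpts n p}"
  proof (rule equalityI; rule subsetI)
    fix x assume "x \<in> {x \<in> Par n k. ?act x = x}"
    then obtain psi r where xe: "x = (psi, r)" and x: "(psi, r) \<in> Par n k"
      and f1: "p \<circ> psi \<circ> pinv p = psi" and f2: "map p r = r" by (cases x) auto
    have psi: "psi permutes {..<n}" and len: "length r = k" and d: "distinct r" and sr: "set r \<subseteq> {..<n}"
      using x unfolding Par_def by auto
    have "p \<circ> psi = psi \<circ> p"
    proof
      fix y
      have "(p \<circ> psi \<circ> pinv p) (p y) = psi (p y)" using f1 by simp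
      thus "(p \<circ> psi) y = (psi \<circ> p) y" using p by (simp add: permutes_inverses)
    qed
    hence "psi \<in> cent n p" unfolding cent_def using psi by simp
    moreover have "set r \<subseteq> fixpts n p" using f2 sr unfolding map_id_iff fixpts_def by auto
    ultimately show "x \<in> cent n p \<times> {xs. length xs = k \<and> distinct xs \<and> set xs \<subseteq> fixpts n p}"
      using xe len d by simp
  next
    fix x assume "x \<in> cent n p \<times> {xs. length xs = k \<and> distinct xs \<and> set xs \<subseteq> fixpts n p}"
    then obtain psi r where xe: "x = (psi, r)" and psi: "psi permutes {..<n}" and c: "psi \<circ> p = p \<circ> psi"
      and len: "length r = k" and d: "distinct r" and sr: "set r \<subseteq> fixpts n p"
      unfolding cent_def by auto
    have "p \<circ> psi \<circ> pinv p = psi"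
    proof
      fix y
      have "(p \<circ> psi \<circ> pinv p) y = (psi \<circ> p) (pinv p y)" using c by simp
      thus "(p \<circ> psi \<circ> pinv p) y = psi y" using p by (simp add: permutes_inverses)
    qed
    moreover have "map p r = r" using sr unfolding map_id_iff fixpts_def by auto
    moreover have "set r \<subseteq> {..<n}" using sr unfolding fixpts_def by auto
    ultimately show "x \<in> {x \<in> Par n k. ?act x = x}" unfolding Par_def using xe psi len d by simp
  qed
  also have "card (cent n p \<times> {xs. length xs = k \<and> distinct xs \<and> set xs \<subseteq> fixpts n p})
      = card (cent n p) * falling (card (fixpts n p)) k"
  proof -
    have fin: "finite (fixpts n p)" unfolding fixpts_def by simp
    show ?thesis by (simp only: card_cartesian_product card_inj_lists[OF fin])
  qed
  finally show ?thesis .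
qed


lemma rep_props:
  assumes C: "C \<in> conj_classes n"
  shows "rep C \<in> C" "cl n (rep C) = C" "rep C \<in> Pn n"
proof -
  obtain q where q: "q \<in> Pn n" and Cq: "C = cl n q" using C unfolding conj_classes_eq by blast
  have "q \<in> C" using cl_self[OF q] Cq by simp
  thus r: "rep C \<in> C" unfolding rep_def by (rule someI[of "\<lambda>p. p \<in> C"])
  show "cl n (rep C) = C" using cl_mem[OF q] r Cq by simp
  show "rep C \<in> Pn n" using cl_sub[OF q] r Cq by blast
qed

lemma supp_fix:
  assumes C: "C \<in> conj_classes n"
  shows "n - supp_size C = card (fixpts n (rep C))"
proof -
  have r: "rep C permutes {..<n}" using rep_props(3)[OF C] unfolding Pn_def by simp
  have sub: "{i. rep C i \<noteq> i} \<subseteq> {..<n}" using r permutes_not_in by fastforce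
  have "fixpts n (rep C) = {..<n} - {i. rep C i \<noteq> i}" unfolding fixpts_def by auto
  hence "card (fixpts n (rep C)) = card {..<n} - card {i. rep C i \<noteq> i}"
    using sub by (simp add: card_Diff_subset finite_subset)
  thus ?thesis unfolding supp_size_def by simp
qed

lemma class_fun:
  assumes C: "C \<in> conj_classes n" and p: "p \<in> C"
  shows "card (cent n p) = card (cent n (rep C))"
    "card (fixpts n p) = card (fixpts n (rep C))"
    "irr_char n lam p = irr_char n lam (rep C)"
proof -
  have "p \<in> cl n (rep C)" using rep_props(2)[OF C] p by simp
  then obtain s where s: "s permutes {..<n}" and ps: "p = s \<circ> rep C \<circ> pinv s" unfolding cl_def by blast
  have r: "rep C permutes {..<n}" using rep_props(3)[OF C] unfolding Pn_def by simp
  show "card (cent n p) = card (cent n (rep C))" unfolding ps by (rule cent_conj[OF s r])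
  show "card (fixpts n p) = card (fixpts n (rep C))" unfolding ps by (rule fix_conj[OF s r])
  show "irr_char n lam p = irr_char n lam (rep C)" unfolding ps by (rule irr_char_conj[OF s r])
qed

theorem mainTheorem6:
  fixes n k :: nat and lam :: "nat list"
  assumes "k \<le> n" and "is_partition lam n"
  shows "multiplicity n lam (perm_char n (H n k)) =
         (\<Sum>C\<in>conj_classes n. irr_char n lam (rep C) * of_nat (falling (n - supp_size C) k))"
proof -
  define g where "g p = of_nat (card (cent n p)) * (of_nat (falling (card (fixpts n p)) k) * irr_char n lam p)" for p
  have pc: "perm_char n (H n k) p * cnj (irr_char n lam p) = g p" if "p \<in> Pn n" for p
    unfolding perm_char_def g_def FIX[OF that assms(1)] irr_char_real by simp
  have "(\<Sum>p | p permutes {..<n}. perm_char n (H n k) p * cnj (irr_char n lam p)) = (\<Sum>p\<in>Pn n. g p)"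
    unfolding Pn_def[symmetric] by (rule sum.cong) (auto simp: pc)
  also have "\<dots> = (\<Sum>C\<in>cl n ` Pn n. (\<Sum>p\<in>{x \<in> Pn n. cl n x = C}. g p))"
    by (rule sum.image_gen[OF finite_Pn])
  also have "\<dots> = (\<Sum>C\<in>conj_classes n. of_nat (fact n) * (irr_char n lam (rep C) * of_nat (falling (n - supp_size C) k)))"
    unfolding conj_classes_eq[symmetric]
  proof (rule sum.cong[OF refl])
    fix C assume C: "C \<in> conj_classes n"
    obtain q where q: "q \<in> Pn n" and Cq: "C = cl n q" using C unfolding conj_classes_eq by blast
    have setC: "{x \<in> Pn n. cl n x = C} = C"
    proof (rule equalityI; rule subsetI)
      fix x assume "x \<in> {x \<in> Pn n. cl n x = C}"
      thus "x \<in> C" using cl_self by blast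
    next
      fix x assume x: "x \<in> C"
      have "x \<in> Pn n" using x cl_sub[OF q] Cq by blast
      moreover have "cl n x = C" using cl_mem[OF q] x Cq by simp
      ultimately show "x \<in> {x \<in> Pn n. cl n x = C}" by blast
    qed
    have finC: "finite C" using cl_sub[OF q] Cq finite_Pn finite_subset by blast
    have "(\<Sum>p\<in>C. g p) = (\<Sum>p\<in>C. g (rep C))"
      by (rule sum.cong[OF refl]) (simp add: g_def class_fun[OF C])
    also have "\<dots> = of_nat (card C) * g (rep C)" by simp
    also have "\<dots> = of_nat (card C * card (cent n (rep C))) * (of_nat (falling (card (fixpts n (rep C))) k) * irr_char n lam (rep C))"
      unfolding g_def by simp
    also have "card C * card (cent n (rep C)) = fact n"
      using orbit_stab[OF rep_props(3)[OF C]] rep_props(2)[OF C] by simp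
    finally show "(\<Sum>p\<in>{x \<in> Pn n. cl n x = C}. g p) = of_nat (fact n) * (irr_char n lam (rep C) * of_nat (falling (n - supp_size C) k))"
      unfolding setC supp_fix[OF C] by simp
  qed
  also have "\<dots> = of_nat (fact n) * (\<Sum>C\<in>conj_classes n. irr_char n lam (rep C) * of_nat (falling (n - supp_size C) k))"
    by (simp add: sum_distrib_left)
  finally show ?thesis unfolding multiplicity_def by simp
qed

end
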